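(* For any $m \in \mathbb{N}$ and any $\vec x = (x_m,\dots,x_1) \in \mathbb{Z}_2^m$, let $I(\vec x) = \sum_{i=1}^m x_i 2^{i-1}$ denote its corresponding integer. Let $V \subseteq \mathbb{Z}_2^n$ be a vector subspace of dimension $k$, linearly ordered via $I$ (i.e. $\vec v < \vec v'$ iff $I(\vec v) < I(\vec v')$), and enumerate its elements in increasing order as $V = \{\vec v_0, \vec v_1, \dots, \vec v_{2^k-1}\}$. Then the map $T: \mathbb{Z}_2^k \to V$ given by $T(\vec x) = \vec v_{I(\vec x)}$ is a linear isomorphism (of $\mathbb{Z}_2$-vector spaces).
   Context: Vectors in $\mathbb{Z}_2^m$ are written with their first-listed coordinate as the most significant bit, so $I$ is the usual binary-to-integer map. *)

theory Defs
  imports Main HOL.Vector_Spaces "HOL-Library.Z2" "HOL-Library.Function_Algebras"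
begin

text \<open>Vectors of Z_2^m are modelled as functions nat => bit whose support lies in
  the coordinate range 1..m; coordinate i carries weight 2^(i-1).
  The ambient Z_2-vector space is (nat => bit) with pointwise operations.\<close>

definition zscale :: "bit \<Rightarrow> (nat \<Rightarrow> bit) \<Rightarrow> (nat \<Rightarrow> bit)" where
  "zscale c x = (\<lambda>i. c * x i)"

definition vecs :: "nat \<Rightarrow> (nat \<Rightarrow> bit) set" where
  "vecs m = {x. \<forall>i. x i \<noteq> 0 \<longrightarrow> 1 \<le> i \<and> i \<le> m}"

definition Ival :: "nat \<Rightarrow> (nat \<Rightarrow> bit) \<Rightarrow> nat" where
  "Ival m x = (\<Sum>i=1..m. of_bit (x i) * 2 ^ (i - 1))"

definition is_subspace :: "nat \<Rightarrow> (nat \<Rightarrow> bit) set \<Rightarrow> bool" where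
  "is_subspace n V \<longleftrightarrow> V \<subseteq> vecs n \<and> 0 \<in> V \<and>
     (\<forall>x\<in>V. \<forall>y\<in>V. x + y \<in> V) \<and> (\<forall>c. \<forall>x\<in>V. zscale c x \<in> V)"

definition enum :: "nat \<Rightarrow> (nat \<Rightarrow> bit) set \<Rightarrow> nat \<Rightarrow> (nat \<Rightarrow> bit)" where
  "enum n V j = (THE v. v \<in> V \<and> card {w\<in>V. Ival n w < Ival n v} = j)"

end

theory Submission
  imports Defs
begin


lemma vs: "vector_space zscale"
  by unfold_locales (auto simp: zscale_def fun_eq_iff algebra_simps)

interpretation Z: vector_space zscale by (rule vs)

lemma Ival_Suc: "Ival (Suc m) x = Ival m x + of_bit (x (Suc m)) * 2 ^ m"
  by (simp add: Ival_def)

lemma Ival_lt: "Ival m x < 2 ^ m"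
proof (induction m)
  case 0 then show ?case by (simp add: Ival_def)
next
  case (Suc m)
  have "of_bit (x (Suc m)) \<le> (1::nat)" by (cases "x (Suc m)") auto
  then have "of_bit (x (Suc m)) * 2 ^ m \<le> (2::nat) ^ m" by simp
  with Suc show ?case by (simp add: Ival_Suc)
qed

lemma Ival_cong: "(\<And>i. 1 \<le> i \<Longrightarrow> i \<le> m \<Longrightarrow> x i = y i) \<Longrightarrow> Ival m x = Ival m y"
  unfolding Ival_def by (rule sum.cong) auto

lemma Ival_less:
  assumes "1 \<le> h" "h \<le> m" "\<And>j. h < j \<Longrightarrow> j \<le> m \<Longrightarrow> x j = y j" "x h = 0" "y h = 1"
  shows "Ival m x < Ival m y"
  using assms
proof (induction m)
  case 0 then show ?case by simp
next
  case (Suc m)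
  show ?case
  proof (cases "h = Suc m")
    case True
    then show ?thesis using Suc.prems Ival_lt[of m x] by (simp add: Ival_Suc)
  next
    case False
    then have "Ival m x < Ival m y" using Suc by auto
    moreover have "x (Suc m) = y (Suc m)" using Suc.prems False by auto
    ultimately show ?thesis by (simp add: Ival_Suc)
  qed
qed


lemma vecsD: "x \<in> vecs m \<Longrightarrow> x i \<noteq> 0 \<Longrightarrow> 1 \<le> i \<and> i \<le> m"
  by (auto simp: vecs_def)

lemma top_diff:
  assumes "x \<in> vecs m" "y \<in> vecs m" "x \<noteq> y"
  shows "\<exists>h. 1 \<le> h \<and> h \<le> m \<and> x h \<noteq> y h \<and> (\<forall>j>h. x j = y j)"
proof -
  define D where "D = {i. x i \<noteq> y i}"
  have sub: "D \<subseteq> {1..m}"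
  proof
    fix i assume "i \<in> D"
    then have "x i \<noteq> 0 \<or> y i \<noteq> 0" by (auto simp: D_def)
    then show "i \<in> {1..m}" using vecsD[OF assms(1)] vecsD[OF assms(2)] by auto
  qed
  then have fin: "finite D" by (rule finite_subset) auto
  have ne: "D \<noteq> {}" using assms(3) by (auto simp: D_def fun_eq_iff)
  define h where "h = Max D"
  have "h \<in> D" using fin ne by (simp add: h_def)
  moreover have "\<forall>j>h. x j = y j"
    using Max_ge[OF fin] by (force simp: h_def D_def)
  ultimately show ?thesis using sub by (intro exI[of _ h]) (auto simp: D_def)
qed

lemma bit_neq_cases: "(a::bit) \<noteq> b \<Longrightarrow> (a = 0 \<and> b = 1) \<or> (a = 1 \<and> b = 0)"
  by (cases a; cases b) auto

lemma Ival_inj: "inj_on (Ival m) (vecs m)"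
proof (rule inj_onI, rule ccontr)
  fix x y assume xy: "x \<in> vecs m" "y \<in> vecs m" "Ival m x = Ival m y" "x \<noteq> y"
  then obtain h where h: "1 \<le> h" "h \<le> m" "x h \<noteq> y h" "\<forall>j>h. x j = y j"
    using top_diff by blast
  from bit_neq_cases[OF h(3)] show False
  proof
    assume "x h = 0 \<and> y h = 1"
    then have "Ival m x < Ival m y" using h by (intro Ival_less[of h]) auto
    then show False using xy by simp
  next
    assume "x h = 1 \<and> y h = 0"
    then have "Ival m y < Ival m x" using h by (intro Ival_less[of h]) auto
    then show False using xy by simp
  qed
qed

lemma vecs_mono: "j \<le> m \<Longrightarrow> vecs j \<subseteq> vecs m"
  by (auto simp: vecs_def)

lemma Ival_surj: "c < 2 ^ m \<Longrightarrow> \<exists>x\<in>vecs m. Ival m x = c"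
proof (induction m arbitrary: c)
  case 0
  then show ?case by (auto simp: vecs_def Ival_def intro!: bexI[of _ "\<lambda>_. 0"])
next
  case (Suc m)
  show ?case
  proof (cases "c < 2 ^ m")
    case True
    then obtain x where x: "x \<in> vecs m" "Ival m x = c" using Suc.IH by blast
    have "x (Suc m) = 0" using vecsD[OF x(1), of "Suc m"] by (cases "x (Suc m)") auto
    then have "Ival (Suc m) x = c" using x by (simp add: Ival_Suc)
    moreover have "x \<in> vecs (Suc m)" using x vecs_mono[of m "Suc m"] by auto
    ultimately show ?thesis by blast
  next
    case False
    have "c - 2 ^ m < 2 ^ m" using Suc.prems False by simp
    then obtain x where x: "x \<in> vecs m" "Ival m x = c - 2 ^ m" using Suc.IH by blast
    define x' where "x' = x(Suc m := 1)"
    have "Ival m x' = Ival m x" by (rule Ival_cong) (auto simp: x'_def)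
    moreover have "x' \<in> vecs (Suc m)" using x(1) by (auto simp: vecs_def x'_def)
    ultimately show ?thesis using x False by (auto simp: Ival_Suc x'_def intro!: bexI[of _ x'])
  qed
qed

lemma Ival_bij: "bij_betw (Ival m) (vecs m) {..<2^m}"
  unfolding bij_betw_def
proof (intro conjI Ival_inj equalityI subsetI)
  fix c assume "c \<in> Ival m ` vecs m"
  then show "c \<in> {..<2^m}" using Ival_lt by auto
next
  fix c assume "c \<in> {..<(2::nat)^m}"
  then obtain x where "x \<in> vecs m" "Ival m x = c" using Ival_surj[of c m] by auto
  then show "c \<in> Ival m ` vecs m" by auto
qed

lemma card_below:
  assumes "x \<in> vecs m"
  shows "card {y\<in>vecs m. Ival m y < Ival m x} = Ival m x"
proof -
  have "Ival m ` {y\<in>vecs m. Ival m y < Ival m x} = {..<Ival m x}"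
  proof (intro equalityI subsetI)
    fix c assume "c \<in> Ival m ` {y\<in>vecs m. Ival m y < Ival m x}"
    then show "c \<in> {..<Ival m x}" by auto
  next
    fix c assume c: "c \<in> {..<Ival m x}"
    then have "c < 2 ^ m" using Ival_lt[of m x] by auto
    then obtain y where "y \<in> vecs m" "Ival m y = c" using Ival_surj[of c m] by auto
    with c show "c \<in> Ival m ` {y\<in>vecs m. Ival m y < Ival m x}" by auto
  qed
  moreover have "inj_on (Ival m) {y\<in>vecs m. Ival m y < Ival m x}"
    using Ival_inj by (rule inj_on_subset) auto
  ultimately show ?thesis by (metis card_image card_lessThan)
qed


definition top :: "(nat \<Rightarrow> bit) \<Rightarrow> nat" where "top v = Max {i. v i \<noteq> 0}"
definition piv :: "(nat\<Rightarrow>bit) set \<Rightarrow> nat list" where "piv V = sorted_list_of_set (top ` (V - {0}))"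
definition psi :: "(nat\<Rightarrow>bit) set \<Rightarrow> (nat\<Rightarrow>bit) \<Rightarrow> (nat\<Rightarrow>bit)" where
  "psi V v = (\<lambda>i. if 1 \<le> i \<and> i \<le> length (piv V) then v (piv V ! (i-1)) else 0)"

lemma top_props:
  assumes "v \<in> vecs n" "v \<noteq> 0"
  shows "v (top v) = 1" "1 \<le> top v" "top v \<le> n" "\<And>j. top v < j \<Longrightarrow> v j = 0"
proof -
  have sub: "{i. v i \<noteq> 0} \<subseteq> {1..n}" using vecsD[OF assms(1)] by auto
  then have fin: "finite {i. v i \<noteq> 0}" by (rule finite_subset) auto
  have ne: "{i. v i \<noteq> 0} \<noteq> {}" using assms(2) by (auto simp: fun_eq_iff)
  have "top v \<in> {i. v i \<noteq> 0}" unfolding top_def using fin ne by (rule Max_in)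
  then show "v (top v) = 1" "1 \<le> top v" "top v \<le> n" using sub by auto
  show "v j = 0" if "top v < j" for j
    using Max_ge[OF fin, of j] that by (force simp: top_def)
qed

lemma bit_add_eq0: "(a::bit) + b = 0 \<longleftrightarrow> a = b"
  by (cases a; cases b) auto

lemma linear_psi: "Vector_Spaces.linear zscale zscale (psi V)"
  unfolding linear_iff using vs by (auto simp: psi_def zscale_def fun_eq_iff)

lemma psi_vecs: "psi V v \<in> vecs (length (piv V))"
  by (auto simp: psi_def vecs_def)

context
  fixes n V assumes sub: "is_subspace n V"
begin

lemma V_vecs: "V \<subseteq> vecs n" using sub by (simp add: is_subspace_def)
lemma V_add: "x \<in> V \<Longrightarrow> y \<in> V \<Longrightarrow> x + y \<in> V" using sub by (simp add: is_subspace_def)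
lemma V_zero: "0 \<in> V" using sub by (simp add: is_subspace_def)
lemma V_scale: "x \<in> V \<Longrightarrow> zscale c x \<in> V" using sub by (simp add: is_subspace_def)

lemma P_fin: "finite (top ` (V - {0}))"
proof -
  have "top ` (V - {0}) \<subseteq> {1..n}" using top_props V_vecs by fastforce
  then show ?thesis by (rule finite_subset) auto
qed

lemma piv_set: "set (piv V) = top ` (V - {0})"
  using P_fin by (simp add: piv_def)

lemma piv_sorted: "sorted_wrt (<) (piv V)"
  by (simp add: piv_def)

lemma piv_less_iff: "i < length (piv V) \<Longrightarrow> j < length (piv V) \<Longrightarrow> piv V ! i < piv V ! j \<longleftrightarrow> i < j"
  using sorted_wrt_nth_less[OF piv_sorted, of i j] sorted_wrt_nth_less[OF piv_sorted, of j i]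
  by (cases i j rule: linorder_cases) auto

lemma piv_range: "i < length (piv V) \<Longrightarrow> 1 \<le> piv V ! i \<and> piv V ! i \<le> n"
proof -
  assume "i < length (piv V)"
  then have "piv V ! i \<in> top ` (V - {0})" using piv_set nth_mem by metis
  then show ?thesis using top_props V_vecs by fastforce
qed

lemma diff_piv:
  assumes "u \<in> V" "w \<in> V" "u \<noteq> w"
  shows "\<exists>d. 1 \<le> d \<and> d \<le> length (piv V) \<and> u (piv V ! (d-1)) \<noteq> w (piv V ! (d-1)) \<and>
     (\<forall>j>piv V ! (d-1). u j = w j)"
proof -
  have uw: "u + w \<in> V" using assms V_add by auto
  have nz: "u + w \<noteq> 0"
  proof
    assume "u + w = 0"
    then have "u = - w" by (simp add: eq_neg_iff_add_eq_0)
    then show False using assms(3) by (simp add: fun_eq_iff)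
  qed
  have "top (u + w) \<in> set (piv V)" using uw nz piv_set by auto
  then obtain i where i: "i < length (piv V)" "piv V ! i = top (u + w)" by (metis in_set_conv_nth)
  have tp: "(u + w) (top (u+w)) = 1" "\<And>j. top (u+w) < j \<Longrightarrow> (u + w) j = 0"
    using top_props[of "u+w" n] uw nz V_vecs by auto
  show ?thesis
  proof (intro exI[of _ "Suc i"] conjI allI impI)
    show "u (piv V ! (Suc i - 1)) \<noteq> w (piv V ! (Suc i - 1))"
      using tp(1) i(2) by (auto simp: bit_add_eq0)
    show "u j = w j" if "piv V ! (Suc i - 1) < j" for j
      using tp(2)[of j] that i(2) by (auto simp: bit_add_eq0)
  qed (use i in auto)
qed

lemma psi_order:
  assumes "u \<in> V" "w \<in> V"
  shows "Ival n u < Ival n w \<longleftrightarrow> Ival (length (piv V)) (psi V u) < Ival (length (piv V)) (psi V w)"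
proof (cases "u = w")
  case True then show ?thesis by simp
next
  case False
  let ?k = "length (piv V)"
  obtain d where d: "1 \<le> d" "d \<le> ?k" "u (piv V ! (d-1)) \<noteq> w (piv V ! (d-1))"
     "\<forall>j>piv V ! (d-1). u j = w j"
    using diff_piv[OF assms False] by blast
  have r: "1 \<le> piv V ! (d-1)" "piv V ! (d-1) \<le> n" using piv_range[of "d-1"] d by auto
  have agree: "psi V u j = psi V w j" if "d < j" "j \<le> ?k" for j
  proof -
    have "piv V ! (d-1) < piv V ! (j-1)" using piv_less_iff[of "d-1" "j-1"] that d by auto
    then show ?thesis using d(4) that by (auto simp: psi_def)
  qed
  have pu: "psi V u d = u (piv V ! (d-1))" "psi V w d = w (piv V ! (d-1))" using d by (auto simp: psi_def)
  from bit_neq_cases[OF d(3)] show ?thesis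
  proof
    assume a: "u (piv V ! (d-1)) = 0 \<and> w (piv V ! (d-1)) = 1"
    have "Ival n u < Ival n w" using a r d(4) by (intro Ival_less[of "piv V ! (d-1)"]) auto
    moreover have "Ival ?k (psi V u) < Ival ?k (psi V w)"
      using a d agree pu by (intro Ival_less[of d]) auto
    ultimately show ?thesis by simp
  next
    assume a: "u (piv V ! (d-1)) = 1 \<and> w (piv V ! (d-1)) = 0"
    have "Ival n w < Ival n u" using a r d(4) by (intro Ival_less[of "piv V ! (d-1)"]) auto
    moreover have "Ival ?k (psi V w) < Ival ?k (psi V u)"
    proof (rule Ival_less[of d])
      show "psi V w j = psi V u j" if "d < j" "j \<le> ?k" for j using agree[OF that] by simp
    qed (use a d pu in auto)
    ultimately show ?thesis by simp
  qed
qed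

lemma psi_inj: "inj_on (psi V) V"
proof (rule inj_onI, rule ccontr)
  fix u w assume a: "u \<in> V" "w \<in> V" "psi V u = psi V w" "u \<noteq> w"
  then obtain d where d: "1 \<le> d" "d \<le> length (piv V)" "u (piv V ! (d-1)) \<noteq> w (piv V ! (d-1))"
    using diff_piv by blast
  have "psi V u d \<noteq> psi V w d" using d by (auto simp: psi_def)
  then show False using a by simp
qed

end


lemma fill_vecs:
  assumes "0 \<in> W" "\<And>x y. x \<in> W \<Longrightarrow> y \<in> W \<Longrightarrow> x + y \<in> W"
    "\<And>d. 1 \<le> d \<Longrightarrow> d \<le> m \<Longrightarrow> \<exists>w\<in>W. w \<in> vecs d \<and> w d = 1"
  shows "vecs m \<subseteq> W"
proof -
  have "j \<le> m \<Longrightarrow> vecs j \<subseteq> W" for j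
  proof (induction j)
    case 0
    have "vecs 0 = {0}"
    proof (intro equalityI subsetI)
      fix x assume x: "x \<in> vecs 0"
      have "x i = 0" for i using vecsD[OF x, of i] by (cases "x i") auto
      then show "x \<in> {0}" by (auto simp: fun_eq_iff)
    qed (simp add: vecs_def)
    then show ?case using assms(1) by simp
  next
    case (Suc j)
    show ?case
    proof
      fix x assume x: "x \<in> vecs (Suc j)"
      show "x \<in> W"
      proof (cases "x (Suc j) = 0")
        case True
        then have "x \<in> vecs j" using x by (auto simp: vecs_def le_Suc_eq)
        then show ?thesis using Suc by auto
      next
        case False
        obtain w where w: "w \<in> W" "w \<in> vecs (Suc j)" "w (Suc j) = 1" using assms(3)[of "Suc j"] Suc.prems by auto
        have "x + w \<in> vecs j" unfolding vecs_def
        proof (intro CollectI allI impI)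
          fix i assume "(x+w) i \<noteq> 0"
          then have ne: "x i \<noteq> w i" by (simp del: add_bit_eq_xor add: bit_add_eq0)
          then have "x i \<noteq> 0 \<or> w i \<noteq> 0" by auto
          then have "1 \<le> i \<and> i \<le> Suc j" using vecsD[OF x] vecsD[OF w(2)] by auto
          moreover have "i \<noteq> Suc j" using ne False w(3) by auto
          ultimately show "1 \<le> i \<and> i \<le> j" by auto
        qed
        then have "x + w \<in> W" using Suc by auto
        then have "(x + w) + w \<in> W" using w(1) assms(2) by blast
        moreover have "(x + w) + w = x" by (simp add: add.assoc fun_eq_iff)
        ultimately show ?thesis by simp
      qed
    qed
  qed
  then show ?thesis by simp
qed

lemma sum_fun_app: "(sum f A) j = sum (\<lambda>i. f i j) A"
  by (induction A rule: infinite_finite_induct) auto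

definition ee :: "nat \<Rightarrow> (nat \<Rightarrow> bit)" where "ee i = (\<lambda>j. if j = i then 1 else 0)"

lemma dim_vecs: "Z.dim (vecs m) = m"
proof (rule Z.dim_unique[of "ee ` {1..m}"])
  show "ee ` {1..m} \<subseteq> vecs m" by (auto simp: ee_def vecs_def split: if_splits)
  show "vecs m \<subseteq> Z.span (ee ` {1..m})"
  proof
    fix x assume x: "x \<in> vecs m"
    have "x = (\<Sum>i\<in>{1..m}. zscale (x i) (ee i))"
    proof
      fix j
      have "(\<Sum>i\<in>{1..m}. zscale (x i) (ee i)) j = (\<Sum>i\<in>{1..m}. x i * ee i j)"
        by (simp add: sum_fun_app zscale_def del: mult_bit_eq_and)
      also have "\<dots> = (if j \<in> {1..m} then x j else 0)"
        by (simp add: ee_def if_distrib sum.If_cases del: mult_bit_eq_and)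
      also have "\<dots> = x j" using vecsD[OF x, of j] by (cases "x j") auto
      finally show "x j = (\<Sum>i\<in>{1..m}. zscale (x i) (ee i)) j" by simp
    qed
    also have "\<dots> \<in> Z.span (ee ` {1..m})"
      by (intro Z.span_sum Z.span_scale Z.span_base) auto
    finally show "x \<in> Z.span (ee ` {1..m})" .
  qed
  have inj: "inj ee" by (auto simp: inj_def ee_def fun_eq_iff split: if_splits)
  show "card (ee ` {1..m}) = m" using card_image[OF inj_on_subset[OF inj]] by simp
  show "Z.independent (ee ` {1..m})"
    unfolding Z.dependent_def
  proof (clarify)
    fix i assume i: "i \<in> {1..m}" and sp: "ee i \<in> Z.span (ee ` {1..m} - {ee i})"
    have "Z.span (ee ` {1..m} - {ee i}) \<subseteq> {x. x i = 0}"
    proof (rule Z.span_minimal)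
      show "ee ` {1..m} - {ee i} \<subseteq> {x. x i = 0}" by (auto simp: ee_def)
      show "Z.subspace {x. x i = 0}" by (auto simp: Z.subspace_def zscale_def)
    qed
    with sp show False by (auto simp: ee_def)
  qed
qed



context
  fixes n V assumes sub: "is_subspace n V"
begin

lemma psi_surj: "psi V ` V = vecs (length (piv V))"
proof
  show "psi V ` V \<subseteq> vecs (length (piv V))" using psi_vecs by auto
  show "vecs (length (piv V)) \<subseteq> psi V ` V"
  proof (rule fill_vecs)
    have "psi V 0 = 0" by (simp add: psi_def fun_eq_iff)
    then show "0 \<in> psi V ` V" using V_zero[OF sub] by (metis image_eqI)
  next
    fix x y assume "x \<in> psi V ` V" "y \<in> psi V ` V"
    then obtain u w where u: "u \<in> V" "x = psi V u" and w: "w \<in> V" "y = psi V w" by auto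
    have "psi V (u + w) = x + y" using u w by (simp add: psi_def fun_eq_iff)
    then show "x + y \<in> psi V ` V" using V_add[OF sub u(1) w(1)] by (metis image_eqI)
  next
    fix d assume d: "1 \<le> d" "d \<le> length (piv V)"
    then have "d - 1 < length (piv V)" by simp
    then have "piv V ! (d-1) \<in> set (piv V)" by (rule nth_mem)
    then have "piv V ! (d-1) \<in> top ` (V - {0})" using piv_set[OF sub] by simp
    then obtain v where v: "v \<in> V" "v \<noteq> 0" "piv V ! (d-1) = top v" by auto
    have vv: "v \<in> vecs n" using v V_vecs[OF sub] by auto
    have "psi V v \<in> vecs d"
      unfolding vecs_def
    proof (intro CollectI allI impI)
      fix i assume i: "psi V v i \<noteq> 0"
      then have i1: "1 \<le> i" "i \<le> length (piv V)" by (auto simp: psi_def split: if_splits)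
      show "1 \<le> i \<and> i \<le> d"
      proof (rule ccontr)
        assume "\<not> (1 \<le> i \<and> i \<le> d)"
        then have "d < i" using i1 by auto
        then have "piv V ! (d-1) < piv V ! (i-1)" using piv_less_iff[OF sub, of "d-1" "i-1"] d i1 by auto
        then have "v (piv V ! (i-1)) = 0" using top_props(4)[OF vv v(2)] v(3) by auto
        then show False using i i1 by (simp add: psi_def)
      qed
    qed
    moreover have "psi V v d = 1" using d top_props(1)[OF vv v(2)] v(3) by (simp add: psi_def)
    ultimately show "\<exists>w\<in>psi V ` V. w \<in> vecs d \<and> w d = 1" using v(1) by blast
  qed
qed

lemma psi_bij: "bij_betw (psi V) V (vecs (length (piv V)))"
  using psi_inj[OF sub] psi_surj by (simp add: bij_betw_def)

lemma V_subspace: "Z.subspace V"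
  using V_zero[OF sub] V_add[OF sub] V_scale[OF sub] by (auto simp: Z.subspace_def)

lemma dim_V: "Z.dim V = length (piv V)"
proof -
  interpret L: module_hom zscale zscale "psi V"
    using linear_psi module_hom_iff_linear by blast
  obtain B where B: "B \<subseteq> V" "Z.independent B" "V \<subseteq> Z.span B" "card B = Z.dim V"
    using Z.basis_exists by blast
  have spB: "Z.span B = V"
    using B(1,3) Z.span_minimal[OF B(1) V_subspace] by auto
  have inj: "inj_on (psi V) (Z.span B)" using psi_inj[OF sub] spB by simp
  have "Z.dim (vecs (length (piv V))) = card B"
  proof (rule Z.dim_unique[of "psi V ` B"])
    show "psi V ` B \<subseteq> vecs (length (piv V))" using B(1) psi_surj by auto
    have "Z.span (psi V ` B) = psi V ` Z.span B" by (rule L.span_image)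
    then show "vecs (length (piv V)) \<subseteq> Z.span (psi V ` B)" using spB psi_surj by simp
    show "Z.independent (psi V ` B)"
      using L.dependent_inj_imageD[OF _ inj] B(2) by blast
    show "card (psi V ` B) = card B"
      using card_image[OF inj_on_subset[OF inj]] Z.span_superset by blast
  qed
  then show ?thesis using dim_vecs B(4) by simp
qed

lemma card_lt:
  assumes v: "v \<in> V"
  shows "card {w\<in>V. Ival n w < Ival n v} = Ival (length (piv V)) (psi V v)"
proof -
  let ?k = "length (piv V)"
  have "psi V ` {w\<in>V. Ival n w < Ival n v} = {y\<in>vecs ?k. Ival ?k y < Ival ?k (psi V v)}"
  proof (intro equalityI subsetI)
    fix y assume "y \<in> psi V ` {w\<in>V. Ival n w < Ival n v}"
    then obtain w where w: "w \<in> V" "Ival n w < Ival n v" "y = psi V w" by auto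
    then show "y \<in> {y\<in>vecs ?k. Ival ?k y < Ival ?k (psi V v)}"
      using psi_order[OF sub w(1) v] psi_vecs by auto
  next
    fix y assume y: "y \<in> {y\<in>vecs ?k. Ival ?k y < Ival ?k (psi V v)}"
    then obtain w where w: "w \<in> V" "y = psi V w" using psi_surj by auto
    then show "y \<in> psi V ` {w\<in>V. Ival n w < Ival n v}"
      using psi_order[OF sub w(1) v] y by auto
  qed
  moreover have "inj_on (psi V) {w\<in>V. Ival n w < Ival n v}"
    using psi_inj[OF sub] by (rule inj_on_subset) auto
  ultimately have "card {w\<in>V. Ival n w < Ival n v} = card {y\<in>vecs ?k. Ival ?k y < Ival ?k (psi V v)}"
    using card_image by fastforce
  also have "\<dots> = Ival ?k (psi V v)" by (rule card_below[OF psi_vecs])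
  finally show ?thesis .
qed

lemma enum_eq:
  assumes x: "x \<in> vecs (length (piv V))"
  shows "enum n V (Ival (length (piv V)) x) = the_inv_into V (psi V) x"
proof -
  let ?k = "length (piv V)"
  let ?v = "the_inv_into V (psi V) x"
  have v: "?v \<in> V" "psi V ?v = x"
    using the_inv_into_into[OF psi_inj[OF sub], of x] f_the_inv_into_f[OF psi_inj[OF sub], of x]
      x psi_surj by auto
  show ?thesis unfolding enum_def
  proof (rule the_equality)
    show "?v \<in> V \<and> card {w \<in> V. Ival n w < Ival n ?v} = Ival ?k x"
      using v card_lt by simp
  next
    fix v' assume a: "v' \<in> V \<and> card {w \<in> V. Ival n w < Ival n v'} = Ival ?k x"
    then have v'V: "v' \<in> V" and c: "card {w \<in> V. Ival n w < Ival n v'} = Ival ?k x" by auto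
    have "Ival ?k (psi V v') = Ival ?k x" using trans[OF card_lt[OF v'V, symmetric] c] .
    then have pv: "psi V v' = x" by (rule inj_onD[OF Ival_inj _ psi_vecs x])
    show "v' = ?v" by (rule inj_onD[OF psi_inj[OF sub] _ v'V v(1)]) (simp add: pv v(2))
  qed
qed

end



theorem lemma1:
  fixes n k :: nat and V :: "(nat \<Rightarrow> bit) set"
  assumes "is_subspace n V"
    and "vector_space.dim zscale V = k"
  defines "T \<equiv> (\<lambda>x. enum n V (Ival k x))"
  shows "Vector_Spaces.linear zscale zscale T \<and> bij_betw T (vecs k) V"
proof -
  note sub = assms(1)
  have k: "k = length (piv V)" using dim_V[OF sub] assms(2) by simp
  define R where "R x = (\<lambda>i. if 1 \<le> i \<and> i \<le> k then x i else (0::bit))" for x :: "nat \<Rightarrow> bit"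
  define G where "G = the_inv_into V (psi V)"
  have Rv: "R x \<in> vecs k" for x by (auto simp: R_def vecs_def)
  have RI: "Ival k (R x) = Ival k x" for x by (rule Ival_cong) (simp add: R_def)
  have Rid: "R x = x" if x: "x \<in> vecs k" for x
  proof
    fix i show "R x i = x i" using vecsD[OF x, of i] by (cases "x i") (auto simp: R_def)
  qed
  have Radd: "R (x + y) = R x + R y" for x y by (simp add: R_def fun_eq_iff)
  have Rsc: "R (zscale c x) = zscale c (R x)" for c x by (simp add: R_def zscale_def fun_eq_iff)
  have TG: "T x = G (R x)" for x
    unfolding T_def G_def using enum_eq[OF sub, of "R x"] Rv[of x] RI[of x] k by simp
  have bij: "bij_betw G (vecs k) V" unfolding G_def k by (rule bij_betw_the_inv_into[OF psi_bij[OF sub]])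
  have inj: "inj_on (psi V) V" by (rule psi_inj[OF sub])
  have GV: "a \<in> vecs k \<Longrightarrow> G a \<in> V" for a using bij by (auto simp: bij_betw_def)
  have pG: "a \<in> vecs k \<Longrightarrow> psi V (G a) = a" for a
    unfolding G_def using f_the_inv_into_f[OF inj, of a] psi_surj[OF sub] k by simp
  have Gp: "v \<in> V \<Longrightarrow> G (psi V v) = v" for v unfolding G_def by (rule the_inv_into_f_f[OF inj])
  have padd: "psi V (x + y) = psi V x + psi V y" "psi V (zscale c x) = zscale c (psi V x)" for x y c
    using linear_psi[of V] unfolding linear_iff by auto
  have Gadd: "G (a + b) = G a + G b" if "a \<in> vecs k" "b \<in> vecs k" for a b
  proof -
    have "G a + G b \<in> V" using V_add[OF sub GV[OF that(1)] GV[OF that(2)]] .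
    moreover have "psi V (G a + G b) = a + b" using padd(1) pG that by simp
    ultimately show ?thesis using Gp by metis
  qed
  have Gsc: "G (zscale c a) = zscale c (G a)" if "a \<in> vecs k" for a c
  proof -
    have "zscale c (G a) \<in> V" using V_scale[OF sub GV[OF that]] .
    moreover have "psi V (zscale c (G a)) = zscale c a" using padd(2) pG that by simp
    ultimately show ?thesis using Gp by metis
  qed
  have lin: "Vector_Spaces.linear zscale zscale T"
    unfolding linear_iff
  proof (intro conjI allI vs)
    show "T (x + y) = T x + T y" for x y using Gadd[OF Rv Rv] by (simp add: TG Radd)
    show "T (zscale c x) = zscale c (T x)" for c x using Gsc[OF Rv] by (simp add: TG Rsc)
  qed
  have "bij_betw T (vecs k) V"
    using bij by (rule bij_betw_cong[THEN iffD1, rotated]) (simp add: TG Rid)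
  with lin show ?thesis by simp
qed

end
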